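(* Let $\mathcal H_A$ be a finite-dimensional Hilbert space, $N\ge1$, and let $\mathcal F(A)\subseteq\mathcal D(\mathcal H_A)$ be a convex set of free states, with $N$-partite free states $\mathcal F(A_1\dots A_N)=\mathrm{Conv}\big(\mathcal F(A)\otimes\dots\otimes\mathcal F(A)\big)$ ($N$ factors). Let $\mathcal F'(A)\subseteq\mathcal F(A)$ be affine and let $\Delta'$ be a resource-censoring map for $(\mathcal F(A),\mathcal F'(A))$ satisfying the standing assumptions below, which is moreover entanglement breaking. Then the censorship implemented by $(\Delta')^{\otimes N}$ is unbreakable: there is no $\rho\in\mathcal D(\mathcal H_A^{\otimes N})$ with $\rho\notin\mathcal F(A_1\dots A_N)$ and $(\Delta')^{\otimes N}(\rho)=\rho$. In particular, $\mathrm{Aff}\big(\mathcal F'(A)^{\otimes N}\big)\subseteq\mathrm{Conv}\big(\mathcal F'(A)^{\otimes N}\big)\subseteq\mathcal F(A_1\dots A_N)$.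
   Context: $\mathcal D(\mathcal H)$ denotes the density operators on a finite-dimensional Hilbert space $\mathcal H$. For $S\subseteq\mathcal D(\mathcal H)$, $\mathrm{Aff}(S)=\{\sum_a t_a\sigma_a:\ \text{finitely many }\sigma_a\in S,\ t_a\in\mathbb R,\ \sum_a t_a=1\}\cap\mathcal D(\mathcal H)$ and $\mathrm{Conv}(S)$ is the same with $t_a\ge0$; $S$ is affine if $\mathrm{Aff}(S)=S$ and convex if $\mathrm{Conv}(S)=S$. $S^{\otimes N}=S\otimes\dots\otimes S=\{\rho_1\otimes\dots\otimes\rho_N:\rho_a\in S\}$. A channel is a linear completely positive trace-preserving map. A resource-censoring (RC) map for $(\mathcal F(A),\mathcal F'(A))$ is a channel $\Delta'$ on operators on $\mathcal H_A$ with $\Delta'(\rho)\in\mathcal F(A)$ for all $\rho\in\mathcal D(\mathcal H_A)$ and $\Delta'(\sigma)=\sigma$ for all $\sigma\in\mathcal F'(A)$. Standing assumptions: $\Delta'\circ\Delta'=\Delta'$ and $\mathcal F'(A)$ is exactly the set of density operators fixed by $\Delta'$. $\Delta'$ is entanglement breaking if for every finite-dimensional $\mathcal K$ and every $\rho\in\mathcal D(\mathcal K\otimes\mathcal H_A)$, $(\mathrm{id}_{\mathcal K}\otimes\Delta')(\rho)\in\mathrm{Conv}(\mathcal D(\mathcal K)\otimes\mathcal D(\mathcal H_A))$. *)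

theory Defs
  imports Complex_Main "HOL-Library.FuncSet"
begin

text \<open>Operators on a finite-dimensional Hilbert space with orthonormal basis indexed by a
finite set I are represented as functions I x I -> complex (matrix entries), vanishing
outside I x I.\<close>

type_synonym 'i op = "'i \<Rightarrow> 'i \<Rightarrow> complex"

definition supp_on :: "'i set \<Rightarrow> 'i op \<Rightarrow> bool" where
  "supp_on I \<rho> \<longleftrightarrow> (\<forall>i j. i \<notin> I \<or> j \<notin> I \<longrightarrow> \<rho> i j = 0)"

definition qform :: "'i set \<Rightarrow> 'i op \<Rightarrow> ('i \<Rightarrow> complex) \<Rightarrow> complex" where
  "qform I \<rho> v = (\<Sum>i\<in>I. \<Sum>j\<in>I. cnj (v i) * \<rho> i j * v j)"

definition psd_on :: "'i set \<Rightarrow> 'i op \<Rightarrow> bool" where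
  "psd_on I \<rho> \<longleftrightarrow> supp_on I \<rho> \<and> (\<forall>v. Im (qform I \<rho> v) = 0 \<and> Re (qform I \<rho> v) \<ge> 0)"

definition trace_on :: "'i set \<Rightarrow> 'i op \<Rightarrow> complex" where
  "trace_on I \<rho> = (\<Sum>i\<in>I. \<rho> i i)"

definition dens :: "'i set \<Rightarrow> 'i op set" where
  "dens I = {\<rho>. psd_on I \<rho> \<and> trace_on I \<rho> = 1}"

definition lin_comb :: "'i op set \<Rightarrow> ('i op \<Rightarrow> real) \<Rightarrow> 'i op" where
  "lin_comb F t = (\<lambda>i j. \<Sum>\<sigma>\<in>F. complex_of_real (t \<sigma>) * \<sigma> i j)"

definition Aff :: "'i set \<Rightarrow> 'i op set \<Rightarrow> 'i op set" where
  "Aff I S = {\<rho>. \<exists>F t. finite F \<and> F \<subseteq> S \<and> sum t F = 1 \<and> \<rho> = lin_comb F t} \<inter> dens I"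

definition Conv :: "'i set \<Rightarrow> 'i op set \<Rightarrow> 'i op set" where
  "Conv I S = {\<rho>. \<exists>F t. finite F \<and> F \<subseteq> S \<and> (\<forall>\<sigma>\<in>F. t \<sigma> \<ge> 0) \<and> sum t F = 1
                   \<and> \<rho> = lin_comb F t} \<inter> dens I"

text \<open>N-fold tensor product H_A^{\<otimes>N}: basis indexed by functions {..<N} -> 'a (extensional).\<close>
definition IN :: "nat \<Rightarrow> (nat \<Rightarrow> 'a) set" where
  "IN N = PiE {..<N} (\<lambda>_. UNIV)"

definition tensor :: "nat \<Rightarrow> (nat \<Rightarrow> 'a op) \<Rightarrow> (nat \<Rightarrow> 'a) op" where
  "tensor N \<rho>s = (\<lambda>i j. if i \<in> IN N \<and> j \<in> IN N then \<Prod>a<N. \<rho>s a (i a) (j a) else 0)"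

definition tensor_set :: "nat \<Rightarrow> 'a op set \<Rightarrow> (nat \<Rightarrow> 'a) op set" where
  "tensor_set N S = {tensor N \<rho>s | \<rho>s. \<forall>a<N. \<rho>s a \<in> S}"

definition unit_op :: "'a \<Rightarrow> 'a \<Rightarrow> 'a op" where
  "unit_op k l = (\<lambda>x y. if x = k \<and> y = l then 1 else 0)"

text \<open>The tensor power \<Phi>^{\<otimes>N} of a linear map \<Phi>, defined on matrix units.\<close>
definition tpow :: "nat \<Rightarrow> ('a op \<Rightarrow> 'a op) \<Rightarrow> (nat \<Rightarrow> 'a) op \<Rightarrow> (nat \<Rightarrow> 'a) op" where
  "tpow N \<Phi> \<rho> = (\<lambda>i j. \<Sum>k\<in>IN N. \<Sum>l\<in>IN N.
       \<rho> k l * tensor N (\<lambda>a. \<Phi> (unit_op (k a) (l a))) i j)"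

text \<open>id_K \<otimes> \<Phi> for K = C^m (basis {..<m}), acting blockwise.\<close>
definition id_tensor :: "nat \<Rightarrow> ('a op \<Rightarrow> 'a op) \<Rightarrow> (nat \<times> 'a) op \<Rightarrow> (nat \<times> 'a) op" where
  "id_tensor m \<Phi> \<rho> = (\<lambda>(k, x) (l, y).
       if k < m \<and> l < m then \<Phi> (\<lambda>x' y'. \<rho> (k, x') (l, y')) x y else 0)"

definition channel :: "('a::finite op \<Rightarrow> 'a op) \<Rightarrow> bool" where
  "channel \<Phi> \<longleftrightarrow>
     (\<forall>\<rho> \<sigma>. \<Phi> (\<lambda>i j. \<rho> i j + \<sigma> i j) = (\<lambda>i j. \<Phi> \<rho> i j + \<Phi> \<sigma> i j)) \<and>
     (\<forall>c \<rho>. \<Phi> (\<lambda>i j. c * \<rho> i j) = (\<lambda>i j. c * \<Phi> \<rho> i j)) \<and>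
     (\<forall>m \<rho>. psd_on ({..<m} \<times> UNIV) \<rho> \<longrightarrow> psd_on ({..<m} \<times> UNIV) (id_tensor m \<Phi> \<rho>)) \<and>
     (\<forall>\<rho>. trace_on UNIV (\<Phi> \<rho>) = trace_on UNIV \<rho>)"

definition RC_map :: "'a::finite op set \<Rightarrow> 'a op set \<Rightarrow> ('a op \<Rightarrow> 'a op) \<Rightarrow> bool" where
  "RC_map F F' \<Delta> \<longleftrightarrow> channel \<Delta> \<and> (\<forall>\<rho>\<in>dens UNIV. \<Delta> \<rho> \<in> F) \<and> (\<forall>\<sigma>\<in>F'. \<Delta> \<sigma> = \<sigma>)"

definition prod_states :: "nat \<Rightarrow> (nat \<times> 'a::finite) op set" where
  "prod_states m = {(\<lambda>(k, x) (l, y). \<sigma> k l * \<tau> x y) | \<sigma> \<tau>.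
                      \<sigma> \<in> dens {..<m} \<and> \<tau> \<in> dens UNIV}"

definition entanglement_breaking :: "('a::finite op \<Rightarrow> 'a op) \<Rightarrow> bool" where
  "entanglement_breaking \<Phi> \<longleftrightarrow>
     (\<forall>m \<rho>. \<rho> \<in> dens ({..<m} \<times> UNIV) \<longrightarrow>
        id_tensor m \<Phi> \<rho> \<in> Conv ({..<m} \<times> UNIV) (prod_states m))"

end

theory Submission
  imports Defs
begin


lemma chan_add: "channel \<Delta> \<Longrightarrow> \<Delta> (\<lambda>i j. \<rho> i j + \<sigma> i j) = (\<lambda>i j. \<Delta> \<rho> i j + \<Delta> \<sigma> i j)"
  unfolding channel_def by blast
lemma chan_smult: "channel \<Delta> \<Longrightarrow> \<Delta> (\<lambda>i j. c * \<rho> i j) = (\<lambda>i j. c * \<Delta> \<rho> i j)"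
  unfolding channel_def by blast
lemma chan_zero: "channel \<Delta> \<Longrightarrow> \<Delta> (\<lambda>i j. 0) = (\<lambda>i j. 0)"
proof -
  assume c: "channel \<Delta>"
  have "\<Delta> (\<lambda>i j. 0 * (0::complex)) = (\<lambda>i j. 0 * \<Delta> (\<lambda>i j. 0) i j)"
    using chan_smult[OF c, of 0 "\<lambda>i j. 0"] by simp
  then show ?thesis by simp
qed

lemma chan_sum: assumes "channel \<Delta>" "finite S"
  shows "\<Delta> (\<lambda>i j. \<Sum>s\<in>S. f s i j) = (\<lambda>i j. \<Sum>s\<in>S. \<Delta> (f s) i j)"
  using assms(2)
proof (induction S rule: finite_induct)
  case empty then show ?case using chan_zero[OF assms(1)] by simp
next
  case (insert s S)
  have "\<Delta> (\<lambda>i j. \<Sum>s\<in>insert s S. f s i j) = \<Delta> (\<lambda>i j. f s i j + (\<Sum>s\<in>S. f s i j))"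
    using insert by simp
  also have "\<dots> = (\<lambda>i j. \<Delta> (f s) i j + \<Delta> (\<lambda>i j. \<Sum>s\<in>S. f s i j) i j)"
    using chan_add[OF assms(1), of "f s" "\<lambda>i j. \<Sum>s\<in>S. f s i j"] by simp
  also have "\<dots> = (\<lambda>i j. \<Sum>s\<in>insert s S. \<Delta> (f s) i j)" using insert by simp
  finally show ?case .
qed

lemma chan_lin: assumes "channel \<Delta>" "finite S"
  shows "\<Delta> (\<lambda>i j. \<Sum>s\<in>S. c s * f s i j) = (\<lambda>i j. \<Sum>s\<in>S. c s * \<Delta> (f s) i j)"
proof -
  have "\<Delta> (\<lambda>i j. \<Sum>s\<in>S. c s * f s i j) = (\<lambda>i j. \<Sum>s\<in>S. \<Delta> (\<lambda>i j. c s * f s i j) i j)"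
    using chan_sum[OF assms, of "\<lambda>s i j. c s * f s i j"] by simp
  also have "\<dots> = (\<lambda>i j. \<Sum>s\<in>S. c s * \<Delta> (f s) i j)"
    using chan_smult[OF assms(1)] by simp
  finally show ?thesis .
qed

lemma unit_expand: "(\<lambda>i j. \<Sum>x\<in>UNIV. \<Sum>y\<in>UNIV. X x y * unit_op x y i j) = (X :: ('a::finite) op)"
proof (intro ext)
  fix i j
  have "(\<Sum>x\<in>UNIV. \<Sum>y\<in>UNIV. X x y * unit_op x y i j) = (\<Sum>x\<in>UNIV. if x = i then X x j else 0)"
    by (intro sum.cong refl) (auto simp: unit_op_def if_distrib cong: if_cong)
  also have "\<dots> = X i j" by simp
  finally show "(\<Sum>x\<in>UNIV. \<Sum>y\<in>UNIV. X x y * unit_op x y i j) = X i j" .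
qed

lemma chan_expand: assumes "channel (\<Delta> :: ('a::finite) op \<Rightarrow> 'a op)"
  shows "\<Delta> X i j = (\<Sum>x\<in>UNIV. \<Sum>y\<in>UNIV. X x y * \<Delta> (unit_op x y) i j)"
proof -
  have "\<Delta> X = \<Delta> (\<lambda>i j. \<Sum>x\<in>UNIV. \<Sum>y\<in>UNIV. X x y * unit_op x y i j)"
    by (simp add: unit_expand)
  also have "\<dots> = (\<lambda>i j. \<Sum>x\<in>UNIV. \<Delta> (\<lambda>i j. \<Sum>y\<in>UNIV. X x y * unit_op x y i j) i j)"
    using chan_sum[OF assms, of UNIV "\<lambda>x i j. \<Sum>y\<in>UNIV. X x y * unit_op x y i j"] by simp
  also have "\<dots> = (\<lambda>i j. \<Sum>x\<in>UNIV. \<Sum>y\<in>UNIV. X x y * \<Delta> (unit_op x y) i j)"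
    by (simp add: chan_lin[OF assms finite_UNIV])
  finally show ?thesis by (metis)
qed


lemma IN_iff: "k \<in> IN N \<longleftrightarrow> (\<forall>a. N \<le> a \<longrightarrow> k a = undefined)"
  by (auto simp: IN_def PiE_iff extensional_def)

lemma finite_IN: "finite (IN N :: (nat \<Rightarrow> 'a::finite) set)"
  unfolding IN_def by (intro finite_PiE) auto

lemma ins_bij: "bij_betw (\<lambda>(k,x). k(N:=x)) (IN N \<times> UNIV) (IN (Suc N))"
proof -
  have "inj_on (\<lambda>(k,x). k(N:=x)) (IN N \<times> UNIV)"
  proof (rule inj_onI, clarify)
    fix k x k' x'
    assume k: "k \<in> IN N" and k': "k' \<in> IN N" and e: "k(N := x) = k'(N := x')"
    have "x = x'" using fun_cong[OF e, of N] by simp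
    moreover have "k = k'"
    proof
      fix a show "k a = k' a"
        using fun_cong[OF e, of a] k k' by (cases "a = N") (auto simp: IN_iff)
    qed
    ultimately show "k = k' \<and> x = x'" by simp
  qed
  moreover have "(\<lambda>(k,x). k(N:=x)) ` (IN N \<times> UNIV) = IN (Suc N)"
  proof
    show "(\<lambda>(k,x). k(N:=x)) ` (IN N \<times> UNIV) \<subseteq> IN (Suc N)"
      by (auto simp: IN_iff)
    show "IN (Suc N) \<subseteq> (\<lambda>(k,x). k(N:=x)) ` (IN N \<times> UNIV)"
    proof
      fix i assume i: "i \<in> IN (Suc N)"
      have "i = (\<lambda>(k,x). k(N:=x)) (i(N:=undefined), i N)" by simp
      moreover have "i(N:=undefined) \<in> IN N" using i by (auto simp: IN_iff)
      ultimately show "i \<in> (\<lambda>(k,x). k(N:=x)) ` (IN N \<times> UNIV)" by blast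
    qed
  qed
  ultimately show ?thesis unfolding bij_betw_def by blast
qed

lemma dens_reindex:
  assumes g: "bij_betw g J I" and r: "\<rho> \<in> dens I" and s: "supp_on J \<rho>'"
    and e: "\<And>a b. a\<in>J \<Longrightarrow> b\<in>J \<Longrightarrow> \<rho>' a b = \<rho> (g a) (g b)"
  shows "\<rho>' \<in> dens J"
proof -
  have q: "qform J \<rho>' v = qform I \<rho> (\<lambda>i. v (inv_into J g i))" for v
  proof -
    have inv: "inv_into J g (g a) = a" if "a \<in> J" for a
      using g that by (simp add: bij_betw_def inv_into_f_f)
    have "qform I \<rho> (\<lambda>i. v (inv_into J g i)) =
          (\<Sum>a\<in>J. \<Sum>j\<in>I. cnj (v (inv_into J g (g a))) * \<rho> (g a) j * v (inv_into J g j))"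
      unfolding qform_def by (rule sum.reindex_bij_betw[OF g, symmetric])
    also have "\<dots> = (\<Sum>a\<in>J. \<Sum>b\<in>J. cnj (v (inv_into J g (g a))) * \<rho> (g a) (g b) * v (inv_into J g (g b)))"
      by (intro sum.cong refl sum.reindex_bij_betw[OF g, symmetric])
    also have "\<dots> = qform J \<rho>' v"
      unfolding qform_def by (intro sum.cong refl) (simp add: inv e)
    finally show ?thesis by simp
  qed
  have t: "trace_on J \<rho>' = trace_on I \<rho>"
    unfolding trace_on_def
    using sum.reindex_bij_betw[OF g, of "\<lambda>i. \<rho> i i"] by (simp add: e)
  show ?thesis using r s unfolding dens_def psd_on_def by (simp add: q t)
qed

lemma agg:
  assumes "finite X" "f ` X \<subseteq> S" "\<forall>x\<in>X. w x \<ge> 0" "sum w X = 1"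
  shows "\<exists>G t. finite G \<and> G \<subseteq> S \<and> (\<forall>\<sigma>\<in>G. t \<sigma> \<ge> 0) \<and> sum t G = 1 \<and>
     (\<lambda>i j. \<Sum>x\<in>X. complex_of_real (w x) * f x i j) = lin_comb G t"
proof (intro exI conjI)
  define t where "t \<sigma> = sum w {x\<in>X. f x = \<sigma>}" for \<sigma>
  show "finite (f ` X)" using assms by simp
  show "f ` X \<subseteq> S" by fact
  show "\<forall>\<sigma>\<in>f ` X. t \<sigma> \<ge> 0" using assms(3) by (auto simp: t_def intro: sum_nonneg)
  show "sum t (f ` X) = 1" using sum.image_gen[OF assms(1), of w f] assms(4) by (simp add: t_def)
  show "(\<lambda>i j. \<Sum>x\<in>X. complex_of_real (w x) * f x i j) = lin_comb (f ` X) t"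
  proof (intro ext)
    fix i j
    have "(\<Sum>x\<in>X. complex_of_real (w x) * f x i j) =
       (\<Sum>\<sigma>\<in>f ` X. \<Sum>x\<in>{x\<in>X. f x = \<sigma>}. complex_of_real (w x) * f x i j)"
      by (rule sum.image_gen[OF assms(1)])
    also have "\<dots> = (\<Sum>\<sigma>\<in>f ` X. complex_of_real (t \<sigma>) * \<sigma> i j)"
      unfolding t_def of_real_sum sum_distrib_right by (intro sum.cong refl) auto
    finally show "(\<Sum>x\<in>X. complex_of_real (w x) * f x i j) = lin_comb (f ` X) t i j"
      by (simp add: lin_comb_def)
  qed
qed


lemma tpow_step:
  fixes \<Delta> :: "('a::finite) op \<Rightarrow> 'a op"
  assumes c: "channel \<Delta>" and i: "i \<in> IN (Suc N)" and j: "j \<in> IN (Suc N)"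
  shows "tpow (Suc N) \<Delta> \<rho> i j = (\<Sum>k\<in>IN N. \<Sum>l\<in>IN N.
     (\<Prod>a<N. \<Delta> (unit_op (k a) (l a)) (i a) (j a)) * \<Delta> (\<lambda>x y. \<rho> (k(N:=x)) (l(N:=y))) (i N) (j N))"
proof -
  define P where "P k l = (\<Prod>a<N. \<Delta> (unit_op (k a) (l a)) (i a) (j a))" for k l :: "nat \<Rightarrow> 'a"
  have pr: "(\<Prod>a<Suc N. \<Delta> (unit_op ((k(N:=x)) a) ((l(N:=y)) a)) (i a) (j a))
       = P k l * \<Delta> (unit_op x y) (i N) (j N)" for k l x y
  proof -
    have "(\<Prod>a<N. \<Delta> (unit_op ((k(N:=x)) a) ((l(N:=y)) a)) (i a) (j a)) = P k l"
      unfolding P_def by (intro prod.cong refl) auto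
    then show ?thesis by (simp add: prod.lessThan_Suc)
  qed
  have "tpow (Suc N) \<Delta> \<rho> i j = (\<Sum>k'\<in>IN (Suc N). \<Sum>l'\<in>IN (Suc N).
      \<rho> k' l' * (\<Prod>a<Suc N. \<Delta> (unit_op (k' a) (l' a)) (i a) (j a)))"
    by (simp add: tpow_def tensor_def i j)
  also have "\<dots> = (\<Sum>(k,x)\<in>IN N \<times> UNIV. \<Sum>(l,y)\<in>IN N \<times> UNIV.
      \<rho> (k(N:=x)) (l(N:=y)) * (\<Prod>a<Suc N. \<Delta> (unit_op ((k(N:=x)) a) ((l(N:=y)) a)) (i a) (j a)))"
    by (simp add: sum.reindex_bij_betw[OF ins_bij, symmetric] case_prod_beta)
  also have "\<dots> = (\<Sum>k\<in>IN N. \<Sum>x\<in>UNIV. \<Sum>l\<in>IN N. \<Sum>y\<in>UNIV.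
      \<rho> (k(N:=x)) (l(N:=y)) * (P k l * \<Delta> (unit_op x y) (i N) (j N)))"
    unfolding sum.cartesian_product[symmetric] by (simp only: pr split_conv)
  also have "\<dots> = (\<Sum>k\<in>IN N. \<Sum>l\<in>IN N. \<Sum>x\<in>UNIV. \<Sum>y\<in>UNIV.
      P k l * (\<rho> (k(N:=x)) (l(N:=y)) * \<Delta> (unit_op x y) (i N) (j N)))"
    by (intro sum.cong refl, subst sum.swap) (simp add: mult_ac)
  also have "\<dots> = (\<Sum>k\<in>IN N. \<Sum>l\<in>IN N. P k l * \<Delta> (\<lambda>x y. \<rho> (k(N:=x)) (l(N:=y))) (i N) (j N))"
  proof -
    have "\<Delta> (\<lambda>x y. \<rho> (k(N:=x)) (l(N:=y))) (i N) (j N) =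
       (\<Sum>x\<in>UNIV. \<Sum>y\<in>UNIV. \<rho> (k(N:=x)) (l(N:=y)) * \<Delta> (unit_op x y) (i N) (j N))" for k l
      by (rule chan_expand[OF c])
    then show ?thesis by (simp only: sum_distrib_left)
  qed
  finally show ?thesis by (simp add: P_def)
qed


lemma IN0: "IN 0 = {\<lambda>_. undefined}"
  by (auto simp: IN_iff)

lemma restr_IN: "i \<in> IN (Suc N) \<Longrightarrow> i(N:=undefined) \<in> IN N"
  by (auto simp: IN_iff)

lemma restr_eq: "i \<in> IN (Suc N) \<Longrightarrow> (i(N:=undefined))(N := i N) = i"
  by auto

lemma tpow_restr:
  assumes "i \<in> IN (Suc N)" "j \<in> IN (Suc N)"
  shows "tpow N \<Delta> X (i(N:=undefined)) (j(N:=undefined)) =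
    (\<Sum>k\<in>IN N. \<Sum>l\<in>IN N. X k l * (\<Prod>a<N. \<Delta> (unit_op (k a) (l a)) (i a) (j a)))"
proof -
  have p: "(\<Prod>x<N. \<Delta> (unit_op (k x) (l x)) ((i(N:=undefined)) x) ((j(N:=undefined)) x))
     = (\<Prod>a<N. \<Delta> (unit_op (k a) (l a)) (i a) (j a))" for k l
    by (intro prod.cong refl) auto
  show ?thesis
  unfolding tpow_def tensor_def using restr_IN[OF assms(1)] restr_IN[OF assms(2)]
  by (simp del: fun_upd_apply add: p)
qed

lemma tensor_Suc:
  assumes "k \<in> IN N" "l \<in> IN N"
  shows "tensor (Suc N) \<sigma>s (k(N:=x)) (l(N:=y)) = tensor N \<sigma>s k l * \<sigma>s N x y"
proof -
  have "k(N:=x) \<in> IN (Suc N)" "l(N:=y) \<in> IN (Suc N)" using assms by (auto simp: IN_iff)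
  moreover have "(\<Prod>a<N. \<sigma>s a ((k(N:=x)) a) ((l(N:=y)) a)) = (\<Prod>a<N. \<sigma>s a (k a) (l a))"
    by (intro prod.cong refl) auto
  ultimately show ?thesis using assms unfolding tensor_def by (simp add: prod.lessThan_Suc)
qed

lemma tpow_step2:
  fixes \<Delta> :: "('a::finite) op \<Rightarrow> 'a op"
  assumes c: "channel \<Delta>" and i: "i \<in> IN (Suc N)" and j: "j \<in> IN (Suc N)" and S: "finite S"
    and h: "\<And>k l. k \<in> IN N \<Longrightarrow> l \<in> IN N \<Longrightarrow>
        \<Delta> (\<lambda>x y. \<rho> (k(N:=x)) (l(N:=y))) (i N) (j N) = (\<Sum>s\<in>S. X s k l * cc s)"
  shows "tpow (Suc N) \<Delta> \<rho> i j = (\<Sum>s\<in>S. cc s * tpow N \<Delta> (X s) (i(N:=undefined)) (j(N:=undefined)))"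
proof -
  define P where "P k l = (\<Prod>a<N. \<Delta> (unit_op (k a) (l a)) (i a) (j a))" for k l :: "nat \<Rightarrow> 'a"
  have "tpow (Suc N) \<Delta> \<rho> i j = (\<Sum>k\<in>IN N. \<Sum>l\<in>IN N. P k l * (\<Sum>s\<in>S. X s k l * cc s))"
    unfolding tpow_step[OF c i j] P_def by (intro sum.cong refl) (simp add: h)
  also have "\<dots> = (\<Sum>k\<in>IN N. \<Sum>l\<in>IN N. \<Sum>s\<in>S. cc s * (X s k l * P k l))"
    by (simp add: sum_distrib_left mult_ac)
  also have "\<dots> = (\<Sum>k\<in>IN N. \<Sum>s\<in>S. \<Sum>l\<in>IN N. cc s * (X s k l * P k l))"
    by (intro sum.cong refl sum.swap)
  also have "\<dots> = (\<Sum>s\<in>S. \<Sum>k\<in>IN N. \<Sum>l\<in>IN N. cc s * (X s k l * P k l))"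
    by (rule sum.swap)
  also have "\<dots> = (\<Sum>s\<in>S. cc s * tpow N \<Delta> (X s) (i(N:=undefined)) (j(N:=undefined)))"
    unfolding tpow_restr[OF i j] P_def by (simp add: sum_distrib_left)
  finally show ?thesis .
qed

lemma tpow_tensor:
  fixes \<Delta> :: "('a::finite) op \<Rightarrow> 'a op"
  assumes c: "channel \<Delta>"
  shows "tpow N \<Delta> (tensor N \<sigma>s) = tensor N (\<lambda>a. \<Delta> (\<sigma>s a))"
proof (induction N)
  case 0
  show ?case by (intro ext) (simp add: tpow_def tensor_def IN0)
next
  case (Suc N)
  show ?case
  proof (intro ext)
    fix i j :: "nat \<Rightarrow> 'a"
    show "tpow (Suc N) \<Delta> (tensor (Suc N) \<sigma>s) i j = tensor (Suc N) (\<lambda>a. \<Delta> (\<sigma>s a)) i j"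
    proof (cases "i \<in> IN (Suc N) \<and> j \<in> IN (Suc N)")
      case False
      then show ?thesis by (auto simp: tpow_def tensor_def)
    next
      case True
      then have i: "i \<in> IN (Suc N)" and j: "j \<in> IN (Suc N)" by auto
      have "tpow (Suc N) \<Delta> (tensor (Suc N) \<sigma>s) i j =
         (\<Sum>s\<in>{()}. \<Delta> (\<sigma>s N) (i N) (j N) * tpow N \<Delta> (tensor N \<sigma>s) (i(N:=undefined)) (j(N:=undefined)))"
      proof (rule tpow_step2[OF c i j])
        fix k l :: "nat \<Rightarrow> 'a" assume k: "k \<in> IN N" and l: "l \<in> IN N"
        show "\<Delta> (\<lambda>x y. tensor (Suc N) \<sigma>s (k(N:=x)) (l(N:=y))) (i N) (j N) =
           (\<Sum>s\<in>{()}. tensor N \<sigma>s k l * \<Delta> (\<sigma>s N) (i N) (j N))"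
          using chan_smult[OF c, of "tensor N \<sigma>s k l" "\<sigma>s N"] by (simp add: tensor_Suc[OF k l])
      qed simp
      also have "\<dots> = tensor N (\<lambda>a. \<Delta> (\<sigma>s a)) (i(N:=undefined)) (j(N:=undefined)) * \<Delta> (\<sigma>s N) (i N) (j N)"
        by (simp add: Suc.IH)
      also have "\<dots> = tensor (Suc N) (\<lambda>a. \<Delta> (\<sigma>s a)) i j"
        using tensor_Suc[OF restr_IN[OF i] restr_IN[OF j], of "\<lambda>a. \<Delta> (\<sigma>s a)" "i N" "j N"]
        by (simp add: restr_eq[OF i] restr_eq[OF j])
      finally show ?thesis .
    qed
  qed
qed


lemma tensor_upd: "tensor N (\<psi>(N:=v)) = tensor N \<psi>"
proof -
  have p: "(\<Prod>a<N. (\<psi>(N:=v)) a (i a) (j a)) = (\<Prod>a<N. \<psi> a (i a) (j a))" for i j :: "nat \<Rightarrow> 'a"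
    by (intro prod.cong refl) auto
  show ?thesis unfolding tensor_def by (intro ext) (simp del: fun_upd_apply add: p)
qed

lemma main_lemma:
  fixes \<Delta> :: "('a::finite) op \<Rightarrow> 'a op"
  assumes c: "channel \<Delta>" and eb: "entanglement_breaking \<Delta>" and idem: "\<Delta> \<circ> \<Delta> = \<Delta>"
  shows "\<rho> \<in> dens (IN N) \<Longrightarrow> \<exists>G t. finite G \<and> G \<subseteq> tensor_set N (\<Delta> ` dens UNIV) \<and>
     (\<forall>\<sigma>\<in>G. t \<sigma> \<ge> 0) \<and> sum t G = 1 \<and> tpow N \<Delta> \<rho> = lin_comb G t"
proof (induction N arbitrary: \<rho>)
  case 0
  define e :: "nat \<Rightarrow> 'a" where "e = (\<lambda>_. undefined)"
  have IN0': "IN 0 = {e}" by (simp add: IN0 e_def)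
  have r: "\<rho> e e = 1" using 0 by (simp add: dens_def trace_on_def IN0')
  define g0 :: "(nat \<Rightarrow> 'a) op" where "g0 = tensor 0 (\<lambda>_. \<lambda>_ _. 0)"
  show ?case
  proof (intro exI conjI)
    show "finite {g0}" by simp
    show "{g0} \<subseteq> tensor_set 0 (\<Delta> ` dens UNIV)" by (auto simp: tensor_set_def g0_def)
    show "\<forall>\<sigma>\<in>{g0}. (\<lambda>_. 1::real) \<sigma> \<ge> 0" by simp
    show "sum (\<lambda>_. 1::real) {g0} = 1" by simp
    show "tpow 0 \<Delta> \<rho> = lin_comb {g0} (\<lambda>_. 1)"
      by (intro ext) (simp add: tpow_def lin_comb_def g0_def tensor_def IN0' r)
  qed
next
  case (Suc N)
  define D where "D = \<Delta> ` dens UNIV"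
  define m where "m = card (IN N :: (nat \<Rightarrow> 'a) set)"
  obtain enc where enc: "bij_betw enc (IN N :: (nat \<Rightarrow> 'a) set) {..<m}"
    using ex_bij_betw_finite_nat[OF finite_IN] unfolding m_def atLeast0LessThan by blast
  define dec where "dec = inv_into (IN N) enc"
  have dec: "bij_betw dec {..<m} (IN N)" unfolding dec_def by (rule bij_betw_inv_into[OF enc])
  have de: "dec (enc k) = k" if "k \<in> IN N" for k
    unfolding dec_def using bij_betw_inv_into_left[OF enc that] .
  have encm: "enc k < m" if "k \<in> IN N" for k using enc that by (auto simp: bij_betw_def)
  define gm where "gm = (\<lambda>(p::nat, x::'a). (dec p)(N:=x))"
  have gm: "bij_betw gm ({..<m} \<times> UNIV) (IN (Suc N))"
  proof -
    have "bij_betw ((\<lambda>(k,x). k(N:=x)) \<circ> map_prod dec id) ({..<m} \<times> UNIV) (IN (Suc N))"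
      by (rule bij_betw_trans[OF bij_betw_map_prod[OF dec bij_betw_id] ins_bij])
    moreover have "(\<lambda>(k,x). k(N:=x)) \<circ> map_prod dec id = gm" by (auto simp: gm_def)
    ultimately show ?thesis by simp
  qed
  define \<rho>' :: "(nat \<times> 'a) op" where
    "\<rho>' = (\<lambda>(p,x) (q,y). if p < m \<and> q < m then \<rho> ((dec p)(N:=x)) ((dec q)(N:=y)) else 0)"
  have \<rho>'d: "\<rho>' \<in> dens ({..<m} \<times> UNIV)"
  proof (rule dens_reindex[OF gm Suc.prems])
    show "supp_on ({..<m} \<times> UNIV) \<rho>'" by (auto simp: supp_on_def \<rho>'_def)
    show "\<rho>' a b = \<rho> (gm a) (gm b)" if "a \<in> {..<m} \<times> UNIV" "b \<in> {..<m} \<times> UNIV" for a b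
      using that by (auto simp: \<rho>'_def gm_def)
  qed
  then have "id_tensor m \<Delta> \<rho>' \<in> Conv ({..<m} \<times> UNIV) (prod_states m)"
    using eb unfolding entanglement_breaking_def by blast
  then obtain G t where G: "finite G" "G \<subseteq> prod_states m" "\<forall>g\<in>G. t g \<ge> 0" "sum t G = 1"
    and Gt: "id_tensor m \<Delta> \<rho>' = lin_comb G t"
    unfolding Conv_def by blast
  have "\<forall>g\<in>G. \<exists>st. fst st \<in> dens {..<m} \<and> snd st \<in> dens UNIV \<and>
      g = (\<lambda>(k, x) (l, y). fst st k l * snd st x y)"
    using G(2) unfolding prod_states_def by force
  then obtain ST where ST: "\<And>g. g \<in> G \<Longrightarrow> fst (ST g) \<in> dens {..<m} \<and> snd (ST g) \<in> dens UNIV \<and>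
      g = (\<lambda>(k, x) (l, y). fst (ST g) k l * snd (ST g) x y)"
    by metis
  define \<sigma> where "\<sigma> g = fst (ST g)" for g
  define \<tau> where "\<tau> g = snd (ST g)" for g
  define \<sigma>t where "\<sigma>t g = (\<lambda>k l. if k \<in> IN N \<and> l \<in> IN N then \<sigma> g (enc k) (enc l) else 0)" for g
  have \<sigma>td: "\<sigma>t g \<in> dens (IN N)" if "g \<in> G" for g
  proof (rule dens_reindex[OF enc])
    show "\<sigma> g \<in> dens {..<m}" using ST[OF that] by (simp add: \<sigma>_def)
    show "supp_on (IN N) (\<sigma>t g)" by (auto simp: supp_on_def \<sigma>t_def)
    show "\<sigma>t g a b = \<sigma> g (enc a) (enc b)" if "a \<in> IN N" "b \<in> IN N" for a b
      using that by (simp add: \<sigma>t_def)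
  qed
  have "\<forall>g\<in>G. \<exists>Hs. finite (fst Hs) \<and> fst Hs \<subseteq> tensor_set N D \<and> (\<forall>h\<in>fst Hs. snd Hs h \<ge> 0)
      \<and> sum (snd Hs) (fst Hs) = 1 \<and> tpow N \<Delta> (\<sigma>t g) = lin_comb (fst Hs) (snd Hs)"
    using Suc.IH[OF \<sigma>td] unfolding D_def by fastforce
  then obtain HS where HS: "\<And>g. g \<in> G \<Longrightarrow> finite (fst (HS g)) \<and> fst (HS g) \<subseteq> tensor_set N D \<and>
     (\<forall>h\<in>fst (HS g). snd (HS g) h \<ge> 0) \<and> sum (snd (HS g)) (fst (HS g)) = 1 \<and>
     tpow N \<Delta> (\<sigma>t g) = lin_comb (fst (HS g)) (snd (HS g))"
    by metis
  define H where "H g = fst (HS g)" for g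
  define s where "s g = snd (HS g)" for g
  define \<phi> where "\<phi> h = (SOME \<psi>. h = tensor N \<psi> \<and> (\<forall>a<N. \<psi> a \<in> D))" for h
  have \<phi>: "h = tensor N (\<phi> h) \<and> (\<forall>a<N. \<phi> h a \<in> D)" if "h \<in> tensor_set N D" for h
  proof -
    have "\<exists>\<psi>. h = tensor N \<psi> \<and> (\<forall>a<N. \<psi> a \<in> D)" using that by (auto simp: tensor_set_def)
    then show ?thesis unfolding \<phi>_def by (rule someI_ex)
  qed
  define X where "X = Sigma G H"
  define w where "w = (\<lambda>(g,h). t g * s g h)"
  define f where "f = (\<lambda>(g,h). tensor (Suc N) ((\<phi> h)(N := \<Delta> (\<tau> g))))"
  have eq: "tpow (Suc N) \<Delta> \<rho> = (\<lambda>i j. \<Sum>x\<in>X. complex_of_real (w x) * f x i j)"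
  proof (intro ext)
    fix i j :: "nat \<Rightarrow> 'a"
    show "tpow (Suc N) \<Delta> \<rho> i j = (\<Sum>x\<in>X. complex_of_real (w x) * f x i j)"
    proof (cases "i \<in> IN (Suc N) \<and> j \<in> IN (Suc N)")
      case False
      have "f x i j = 0" for x using False by (auto simp: f_def tensor_def split: prod.splits)
      then show ?thesis using False by (auto simp: tpow_def tensor_def)
    next
      case True
      then have i: "i \<in> IN (Suc N)" and j: "j \<in> IN (Suc N)" by auto
      define ri where "ri = i(N:=undefined)"
      define rj where "rj = j(N:=undefined)"
      have ri: "ri \<in> IN N" and rj: "rj \<in> IN N" using restr_IN[OF i] restr_IN[OF j] by (simp_all add: ri_def rj_def)
      have step: "tpow (Suc N) \<Delta> \<rho> i j =
          (\<Sum>g\<in>G. (complex_of_real (t g) * \<Delta> (\<tau> g) (i N) (j N)) * tpow N \<Delta> (\<sigma>t g) ri rj)"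
        unfolding ri_def rj_def
      proof (rule tpow_step2[OF c i j G(1)])
        fix k l :: "nat \<Rightarrow> 'a" assume k: "k \<in> IN N" and l: "l \<in> IN N"
        define Y where "Y = (\<lambda>x y. \<rho> (k(N:=x)) (l(N:=y)))"
        have gexp: "g (enc k, x) (enc l, y) = \<sigma> g (enc k) (enc l) * \<tau> g x y" if "g \<in> G" for g x y
        proof -
          have "g = (\<lambda>(k, x) (l, y). \<sigma> g k l * \<tau> g x y)" using ST[OF that] by (simp add: \<sigma>_def \<tau>_def)
          then show ?thesis by (metis (no_types, lifting) case_prod_conv)
        qed
        have DY: "\<Delta> Y = (\<lambda>x y. \<Sum>g\<in>G. (complex_of_real (t g) * \<sigma> g (enc k) (enc l)) * \<tau> g x y)"
        proof (intro ext)
          fix x y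
          have "\<Delta> Y x y = id_tensor m \<Delta> \<rho>' (enc k, x) (enc l, y)"
            unfolding id_tensor_def using encm[OF k] encm[OF l]
            by (simp add: Y_def \<rho>'_def de k l)
          also have "\<dots> = (\<Sum>g\<in>G. complex_of_real (t g) * g (enc k, x) (enc l, y))"
            by (simp add: Gt lin_comb_def)
          also have "\<dots> = (\<Sum>g\<in>G. (complex_of_real (t g) * \<sigma> g (enc k) (enc l)) * \<tau> g x y)"
            by (intro sum.cong refl) (simp add: gexp)
          finally show "\<Delta> Y x y = (\<Sum>g\<in>G. (complex_of_real (t g) * \<sigma> g (enc k) (enc l)) * \<tau> g x y)" .
        qed
        have "\<Delta> Y = \<Delta> (\<Delta> Y)" using fun_cong[OF idem, of Y] by simp
        also have "\<dots> = (\<lambda>x y. \<Sum>g\<in>G. (complex_of_real (t g) * \<sigma> g (enc k) (enc l)) * \<Delta> (\<tau> g) x y)"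
          unfolding DY by (rule chan_lin[OF c G(1)])
        finally have "\<Delta> Y (i N) (j N) = (\<Sum>g\<in>G. (complex_of_real (t g) * \<sigma> g (enc k) (enc l)) * \<Delta> (\<tau> g) (i N) (j N))"
          by simp
        then show "\<Delta> (\<lambda>x y. \<rho> (k(N:=x)) (l(N:=y))) (i N) (j N) =
            (\<Sum>g\<in>G. \<sigma>t g k l * (complex_of_real (t g) * \<Delta> (\<tau> g) (i N) (j N)))"
          by (simp add: Y_def \<sigma>t_def k l mult_ac)
      qed
      have fe: "f (g, h) i j = h ri rj * \<Delta> (\<tau> g) (i N) (j N)" if g: "g \<in> G" and h: "h \<in> H g" for g h
      proof -
        have hD: "h \<in> tensor_set N D" using HS[OF g] h by (auto simp: H_def)
        have "f (g, h) i j = tensor (Suc N) ((\<phi> h)(N := \<Delta> (\<tau> g))) (ri(N := i N)) (rj(N := j N))"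
          using restr_eq[OF i] restr_eq[OF j] by (simp add: f_def ri_def rj_def)
        also have "\<dots> = tensor N ((\<phi> h)(N := \<Delta> (\<tau> g))) ri rj * \<Delta> (\<tau> g) (i N) (j N)"
          by (simp add: tensor_Suc[OF ri rj])
        also have "\<dots> = h ri rj * \<Delta> (\<tau> g) (i N) (j N)"
          using \<phi>[OF hD] by (simp add: tensor_upd)
        finally show ?thesis .
      qed
      have "tpow (Suc N) \<Delta> \<rho> i j = (\<Sum>g\<in>G. (complex_of_real (t g) * \<Delta> (\<tau> g) (i N) (j N)) *
           (\<Sum>h\<in>H g. complex_of_real (s g h) * h ri rj))"
        unfolding step by (intro sum.cong refl) (simp add: HS H_def s_def lin_comb_def)
      also have "\<dots> = (\<Sum>g\<in>G. \<Sum>h\<in>H g. complex_of_real (w (g, h)) * f (g, h) i j)"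
        by (intro sum.cong refl) (simp add: fe w_def sum_distrib_left mult_ac)
      also have "\<dots> = (\<Sum>x\<in>X. complex_of_real (w x) * f x i j)"
        unfolding X_def using G(1) HS by (subst sum.Sigma) (auto simp: H_def)
      finally show ?thesis .
    qed
  qed
  have "\<exists>G t. finite G \<and> G \<subseteq> tensor_set (Suc N) D \<and> (\<forall>\<sigma>\<in>G. t \<sigma> \<ge> 0) \<and> sum t G = 1 \<and>
     (\<lambda>i j. \<Sum>x\<in>X. complex_of_real (w x) * f x i j) = lin_comb G t"
  proof (rule agg)
    show "finite X" unfolding X_def using G(1) HS by (auto simp: H_def)
    show "f ` X \<subseteq> tensor_set (Suc N) D"
    proof clarify
      fix g h assume "(g, h) \<in> X"
      then have g: "g \<in> G" and h: "h \<in> H g" by (auto simp: X_def)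
      have hD: "h \<in> tensor_set N D" using HS[OF g] h by (auto simp: H_def)
      have "\<tau> g \<in> dens UNIV" using ST[OF g] by (simp add: \<tau>_def)
      then have "\<Delta> (\<tau> g) \<in> D" by (simp add: D_def)
      then have "\<forall>a<Suc N. ((\<phi> h)(N := \<Delta> (\<tau> g))) a \<in> D" using \<phi>[OF hD] by (auto simp: less_Suc_eq)
      then show "f (g, h) \<in> tensor_set (Suc N) D" unfolding f_def tensor_set_def by auto
    qed
    show "\<forall>x\<in>X. w x \<ge> 0" using G(3) HS by (auto simp: X_def w_def H_def s_def)
    show "sum w X = 1"
    proof -
      have "sum w X = (\<Sum>g\<in>G. \<Sum>h\<in>H g. t g * s g h)"
        unfolding X_def w_def using G(1) HS by (subst sum.Sigma) (auto simp: H_def)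
      also have "\<dots> = (\<Sum>g\<in>G. t g)"
        using HS by (intro sum.cong refl) (simp add: sum_distrib_left[symmetric] H_def s_def)
      finally show ?thesis using G(4) by simp
    qed
  qed
  then show ?case unfolding eq D_def .
qed


lemma tensor_set_mono: "A \<subseteq> B \<Longrightarrow> tensor_set N A \<subseteq> tensor_set N B"
  unfolding tensor_set_def by blast

lemma Conv_mono: "S \<subseteq> T \<Longrightarrow> Conv I S \<subseteq> Conv I T"
  unfolding Conv_def by blast

lemma tpow_lin: "finite G \<Longrightarrow> tpow N \<Phi> (lin_comb G t) = (\<lambda>i j. \<Sum>g\<in>G. complex_of_real (t g) * tpow N \<Phi> g i j)"
proof (intro ext)
  fix i j
  assume G: "finite G"
  have "tpow N \<Phi> (lin_comb G t) i j = (\<Sum>k\<in>IN N. \<Sum>l\<in>IN N. \<Sum>g\<in>G.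
     complex_of_real (t g) * (g k l * tensor N (\<lambda>a. \<Phi> (unit_op (k a) (l a))) i j))"
    unfolding tpow_def lin_comb_def by (simp add: sum_distrib_right mult_ac)
  also have "\<dots> = (\<Sum>k\<in>IN N. \<Sum>g\<in>G. \<Sum>l\<in>IN N.
     complex_of_real (t g) * (g k l * tensor N (\<lambda>a. \<Phi> (unit_op (k a) (l a))) i j))"
    by (intro sum.cong refl sum.swap)
  also have "\<dots> = (\<Sum>g\<in>G. \<Sum>k\<in>IN N. \<Sum>l\<in>IN N.
     complex_of_real (t g) * (g k l * tensor N (\<lambda>a. \<Phi> (unit_op (k a) (l a))) i j))"
    by (rule sum.swap)
  also have "\<dots> = (\<Sum>g\<in>G. complex_of_real (t g) * tpow N \<Phi> g i j)"
    unfolding tpow_def by (simp add: sum_distrib_left)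
  finally show "tpow N \<Phi> (lin_comb G t) i j = (\<Sum>g\<in>G. complex_of_real (t g) * tpow N \<Phi> g i j)" .
qed

theorem theorem3:
  fixes F F' :: "'a::finite op set" and \<Delta> :: "'a op \<Rightarrow> 'a op" and N :: nat
  assumes "N \<ge> 1"
    and "F \<subseteq> dens UNIV" and "Conv UNIV F = F"
    and "F' \<subseteq> F" and "Aff UNIV F' = F'"
    and "RC_map F F' \<Delta>"
    and "\<Delta> \<circ> \<Delta> = \<Delta>"
    and "F' = {\<rho> \<in> dens UNIV. \<Delta> \<rho> = \<rho>}"
    and "entanglement_breaking \<Delta>"
  shows "\<not> (\<exists>\<rho> \<in> dens (IN N). \<rho> \<notin> Conv (IN N) (tensor_set N F) \<and> tpow N \<Delta> \<rho> = \<rho>)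
       \<and> Aff (IN N) (tensor_set N F') \<subseteq> Conv (IN N) (tensor_set N F')
       \<and> Conv (IN N) (tensor_set N F') \<subseteq> Conv (IN N) (tensor_set N F)"
proof -
  have c: "channel \<Delta>" using assms(6) by (simp add: RC_map_def)
  have DF': "\<Delta> ` dens UNIV \<subseteq> F'"
  proof
    fix x assume "x \<in> \<Delta> ` dens UNIV"
    then obtain \<sigma> where s: "\<sigma> \<in> dens UNIV" "x = \<Delta> \<sigma>" by blast
    have "x \<in> F" using assms(6) s by (simp add: RC_map_def)
    then have "x \<in> dens UNIV" using assms(2) by blast
    moreover have "\<Delta> x = x" using fun_cong[OF assms(7), of \<sigma>] s by simp
    ultimately show "x \<in> F'" using assms(8) by blast
  qed
  have conv: "tpow N \<Delta> \<rho> \<in> Conv (IN N) (tensor_set N F')" if rd: "\<rho> \<in> dens (IN N)" and rf: "tpow N \<Delta> \<rho> = \<rho>" for \<rho>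
  proof -
    obtain G t where "finite G" "G \<subseteq> tensor_set N (\<Delta> ` dens UNIV)" "\<forall>\<sigma>\<in>G. t \<sigma> \<ge> 0" "sum t G = 1"
      "tpow N \<Delta> \<rho> = lin_comb G t"
      using main_lemma[OF c assms(9) assms(7) rd] by blast
    moreover have "G \<subseteq> tensor_set N F'" using calculation(2) tensor_set_mono[OF DF'] by blast
    ultimately show ?thesis using rd rf unfolding Conv_def by auto
  qed
  have C: "Conv (IN N) (tensor_set N F') \<subseteq> Conv (IN N) (tensor_set N F)"
    by (intro Conv_mono tensor_set_mono assms(4))
  have P1: "\<not> (\<exists>\<rho> \<in> dens (IN N). \<rho> \<notin> Conv (IN N) (tensor_set N F) \<and> tpow N \<Delta> \<rho> = \<rho>)"
    using conv C by fastforce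
  have P2: "Aff (IN N) (tensor_set N F') \<subseteq> Conv (IN N) (tensor_set N F')"
  proof
    fix \<rho> assume "\<rho> \<in> Aff (IN N) (tensor_set N F')"
    then obtain G t where G: "finite G" "G \<subseteq> tensor_set N F'" "\<rho> = lin_comb G t"
      and d: "\<rho> \<in> dens (IN N)" unfolding Aff_def by blast
    have fix1: "tpow N \<Delta> g = g" if gG: "g \<in> G" for g
    proof -
      obtain \<sigma>s where g: "g = tensor N \<sigma>s" and s: "\<forall>a<N. \<sigma>s a \<in> F'"
        using G(2) gG unfolding tensor_set_def by blast
      have "\<Delta> (\<sigma>s a) = \<sigma>s a" if aN: "a < N" for a using s aN assms(8) by blast
      then have "(\<Prod>a<N. \<Delta> (\<sigma>s a) (i a) (j a)) = (\<Prod>a<N. \<sigma>s a (i a) (j a))" for i j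
        by (intro prod.cong refl) auto
      then have "tensor N (\<lambda>a. \<Delta> (\<sigma>s a)) = tensor N \<sigma>s"
        unfolding tensor_def by (intro ext) simp
      then show ?thesis using tpow_tensor[OF c] g by simp
    qed
    have "tpow N \<Delta> \<rho> = \<rho>"
      unfolding G(3) tpow_lin[OF G(1)] by (intro ext) (simp add: fix1 lin_comb_def cong: sum.cong)
    then show "\<rho> \<in> Conv (IN N) (tensor_set N F')" using conv[OF d] by simp
  qed
  show ?thesis using P1 P2 C by blast
qed

end
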